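(* Under the setting of the context, the function $v(i,y)=\sum_{n\ge0}\sum_{j\in E}P^n(i,j)g(j,y)$ is well defined, bounded by $\Gamma(1-c)^{-1}$, and twice continuously differentiable in $y$ with bounded derivatives. In particular, $v$ is Lipschitz continuous in $y$, uniformly in $i\in E$.
   Context: Let $d\ge1$, $(e_1,\dots,e_d)$ the canonical basis of $\mathbb R^d$, $\mathcal V=\{\pm e_1,\dots,\pm e_d\}$. Let $E$ be a finite set and $P$ an irreducible and aperiodic stochastic matrix on $E$ with unique invariant probability $\mu$; let $\Gamma>0$ and $c\in(0,1)$ be constants such that $\sum_{j\in E}|P^n(i,j)-\mu(j)|\le\Gamma c^n$ for all $n\ge0$, $i\in E$. For each $k\in E$, $y\in\mathbb R^d$, $p(k,y,\cdot)$ is a probability on $\mathcal V$, with $y\mapsto p(k,y,u)$ twice continuously differentiable with bounded derivatives. Let $g(k,y)=\sum_{u\in\mathcal V}u\,p(k,y,u)$ and assume $\sum_k\mu(k)g(k,y)=0$ for all $y\in\mathbb R^d$. *)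

theory Defs
  imports "HOL-Analysis.Analysis"
begin

fun matpow :: "('e::finite \<Rightarrow> 'e \<Rightarrow> real) \<Rightarrow> nat \<Rightarrow> 'e \<Rightarrow> 'e \<Rightarrow> real" where
  "matpow P 0 = (\<lambda>i j. if i = j then 1 else 0)"
| "matpow P (Suc n) = (\<lambda>i j. \<Sum>k\<in>UNIV. matpow P n i k * P k j)"

definition stochastic :: "('e::finite \<Rightarrow> 'e \<Rightarrow> real) \<Rightarrow> bool" where
  "stochastic P \<longleftrightarrow> (\<forall>i j. 0 \<le> P i j) \<and> (\<forall>i. (\<Sum>j\<in>UNIV. P i j) = 1)"

definition irreducible_mat :: "('e::finite \<Rightarrow> 'e \<Rightarrow> real) \<Rightarrow> bool" where
  "irreducible_mat P \<longleftrightarrow> (\<forall>i j. \<exists>n. 0 < matpow P n i j)"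

definition aperiodic_mat :: "('e::finite \<Rightarrow> 'e \<Rightarrow> real) \<Rightarrow> bool" where
  "aperiodic_mat P \<longleftrightarrow> (\<forall>i. Gcd {n. 0 < n \<and> 0 < matpow P n i i} = (1::nat))"

definition invariant_prob :: "('e::finite \<Rightarrow> 'e \<Rightarrow> real) \<Rightarrow> ('e \<Rightarrow> real) \<Rightarrow> bool" where
  "invariant_prob P \<mu> \<longleftrightarrow> (\<forall>j. 0 \<le> \<mu> j) \<and> (\<Sum>j\<in>UNIV. \<mu> j) = 1 \<and>
     (\<forall>j. (\<Sum>i\<in>UNIV. \<mu> i * P i j) = \<mu> j)"

definition steps :: "'a::euclidean_space set" where
  "steps = Basis \<union> uminus ` Basis"

definition drift :: "('e \<Rightarrow> 'a::euclidean_space \<Rightarrow> 'a \<Rightarrow> real) \<Rightarrow> 'e \<Rightarrow> 'a \<Rightarrow> 'a" where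
  "drift p k y = (\<Sum>u\<in>steps. p k y u *\<^sub>R u)"

definition C2_bounded_derivs :: "('a::euclidean_space \<Rightarrow> 'b::real_normed_vector) \<Rightarrow> bool" where
  "C2_bounded_derivs f \<longleftrightarrow>
     (\<exists>(D1 :: 'a \<Rightarrow> 'a \<Rightarrow>\<^sub>L 'b) (D2 :: 'a \<Rightarrow> 'a \<Rightarrow>\<^sub>L ('a \<Rightarrow>\<^sub>L 'b)).
        (\<forall>y. (f has_derivative blinfun_apply (D1 y)) (at y)) \<and>
        (\<forall>y. (D1 has_derivative blinfun_apply (D2 y)) (at y)) \<and>
        continuous_on UNIV D2 \<and> bounded (range D1) \<and> bounded (range D2))"

definition vfun :: "('e::finite \<Rightarrow> 'e \<Rightarrow> real) \<Rightarrow> ('e \<Rightarrow> 'a::euclidean_space \<Rightarrow> 'a \<Rightarrow> real)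
     \<Rightarrow> 'e \<Rightarrow> 'a \<Rightarrow> 'a" where
  "vfun P p i y = (\<Sum>n. \<Sum>j\<in>UNIV. matpow P n i j *\<^sub>R drift p j y)"

end

theory Submission
  imports Defs
begin

lemma C2_linear:
  fixes f :: "'a::euclidean_space \<Rightarrow> 'b::real_normed_vector" and L :: "'b \<Rightarrow> 'c::real_normed_vector"
  assumes "C2_bounded_derivs f" "bounded_linear L"
  shows "C2_bounded_derivs (\<lambda>y. L (f y))"
proof -
  obtain D1 :: "'a \<Rightarrow> 'a \<Rightarrow>\<^sub>L 'b" and D2 :: "'a \<Rightarrow> 'a \<Rightarrow>\<^sub>L ('a \<Rightarrow>\<^sub>L 'b)" where
    d1: "\<And>y. (f has_derivative blinfun_apply (D1 y)) (at y)" and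
    d2: "\<And>y. (D1 has_derivative blinfun_apply (D2 y)) (at y)" and
    c2: "continuous_on UNIV D2" and b1: "bounded (range D1)" and b2: "bounded (range D2)"
    using assms(1) unfolding C2_bounded_derivs_def by blast
  define Lb where "Lb = Blinfun L"
  have Lb: "blinfun_apply Lb = L" using assms(2) by (simp add: Lb_def bounded_linear_Blinfun_apply)
  define CLf where "CLf = (\<lambda>X::'a \<Rightarrow>\<^sub>L 'b. Lb o\<^sub>L X)"
  have blC: "bounded_linear CLf" unfolding CLf_def
    by (rule bounded_bilinear.bounded_linear_right[OF bounded_bilinear_blinfun_compose])
  define CL where "CL = Blinfun CLf"
  have CL: "blinfun_apply CL = CLf" using blC by (simp add: CL_def bounded_linear_Blinfun_apply)
  define E1 where "E1 = (\<lambda>y. Lb o\<^sub>L D1 y)"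
  define E2 where "E2 = (\<lambda>y. CL o\<^sub>L D2 y)"
  have e1: "((\<lambda>y. L (f y)) has_derivative blinfun_apply (E1 y)) (at y)" for y
  proof -
    have "((\<lambda>y. L (f y)) has_derivative (\<lambda>h. L (blinfun_apply (D1 y) h))) (at y)"
      by (rule bounded_linear.has_derivative[OF assms(2) d1])
    moreover have "blinfun_apply (E1 y) = (\<lambda>h. L (blinfun_apply (D1 y) h))"
      by (auto simp: E1_def Lb)
    ultimately show ?thesis by simp
  qed
  have e2: "(E1 has_derivative blinfun_apply (E2 y)) (at y)" for y
  proof -
    have "((\<lambda>y. CLf (D1 y)) has_derivative (\<lambda>h. CLf (blinfun_apply (D2 y) h))) (at y)"
      by (rule bounded_linear.has_derivative[OF blC d2])
    moreover have "blinfun_apply (E2 y) = (\<lambda>h. CLf (blinfun_apply (D2 y) h))"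
      by (auto simp: E2_def CL)
    moreover have "E1 = (\<lambda>y. CLf (D1 y))" by (auto simp: E1_def CLf_def)
    ultimately show ?thesis by simp
  qed
  have ce2: "continuous_on UNIV E2"
    unfolding E2_def
    by (intro continuous_intros c2)
  have be1: "bounded (range E1)"
  proof -
    obtain B where B: "\<And>y. norm (D1 y) \<le> B" using b1 by (auto simp: bounded_iff)
    have "norm (E1 y) \<le> norm Lb * B" for y
      unfolding E1_def by (rule order_trans[OF norm_blinfun_compose]) (simp add: B mult_left_mono)
    then show ?thesis by (auto simp: bounded_iff)
  qed
  have be2: "bounded (range E2)"
  proof -
    obtain B where B: "\<And>y. norm (D2 y) \<le> B" using b2 by (auto simp: bounded_iff)
    have "norm (E2 y) \<le> norm CL * B" for y
      unfolding E2_def by (rule order_trans[OF norm_blinfun_compose]) (simp add: B mult_left_mono)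
    then show ?thesis by (auto simp: bounded_iff)
  qed
  show ?thesis unfolding C2_bounded_derivs_def
    using e1 e2 ce2 be1 be2 by blast
qed

lemma C2_add:
  fixes f g :: "'a::euclidean_space \<Rightarrow> 'b::real_normed_vector"
  assumes "C2_bounded_derivs f" "C2_bounded_derivs g"
  shows "C2_bounded_derivs (\<lambda>y. f y + g y)"
proof -
  obtain D1 :: "'a \<Rightarrow> 'a \<Rightarrow>\<^sub>L 'b" and D2 :: "'a \<Rightarrow> 'a \<Rightarrow>\<^sub>L ('a \<Rightarrow>\<^sub>L 'b)" where
    d1: "\<And>y. (f has_derivative blinfun_apply (D1 y)) (at y)" and
    d2: "\<And>y. (D1 has_derivative blinfun_apply (D2 y)) (at y)" and
    c2: "continuous_on UNIV D2" and b1: "bounded (range D1)" and b2: "bounded (range D2)"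
    using assms(1) unfolding C2_bounded_derivs_def by blast
  obtain F1 :: "'a \<Rightarrow> 'a \<Rightarrow>\<^sub>L 'b" and F2 :: "'a \<Rightarrow> 'a \<Rightarrow>\<^sub>L ('a \<Rightarrow>\<^sub>L 'b)" where
    f1: "\<And>y. (g has_derivative blinfun_apply (F1 y)) (at y)" and
    f2: "\<And>y. (F1 has_derivative blinfun_apply (F2 y)) (at y)" and
    cf2: "continuous_on UNIV F2" and bf1: "bounded (range F1)" and bf2: "bounded (range F2)"
    using assms(2) unfolding C2_bounded_derivs_def by blast
  have e1: "((\<lambda>y. f y + g y) has_derivative blinfun_apply (D1 y + F1 y)) (at y)" for y
    using has_derivative_add[OF d1 f1] by (simp add: plus_blinfun.rep_eq[abs_def])
  have e2: "((\<lambda>y. D1 y + F1 y) has_derivative blinfun_apply (D2 y + F2 y)) (at y)" for y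
    using has_derivative_add[OF d2 f2] by (simp add: plus_blinfun.rep_eq[abs_def])
  have ce2: "continuous_on UNIV (\<lambda>y. D2 y + F2 y)" by (intro continuous_intros c2 cf2)
  have bnd: "bounded (range (\<lambda>y. A y + B y))" if hA: "bounded (range A)" and hB: "bounded (range B)"
    for A B :: "'a \<Rightarrow> 'z::real_normed_vector"
  proof -
    obtain a where a: "\<And>y. norm (A y) \<le> a" using hA by (auto simp: bounded_iff)
    obtain b where b: "\<And>y. norm (B y) \<le> b" using hB by (auto simp: bounded_iff)
    note a b
    then have "norm (A y + B y) \<le> a + b" for y by (meson add_mono norm_triangle_le)
    then show ?thesis by (auto simp: bounded_iff)
  qed
  show ?thesis unfolding C2_bounded_derivs_def
    apply (rule exI[of _ "\<lambda>y. D1 y + F1 y"], rule exI[of _ "\<lambda>y. D2 y + F2 y"])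
    using e1 e2 ce2 bnd[OF b1 bf1] bnd[OF b2 bf2] by blast
qed

lemma C2_zero: "C2_bounded_derivs (\<lambda>y::'a::euclidean_space. 0::'b::real_normed_vector)"
  unfolding C2_bounded_derivs_def
  apply (rule exI[of _ "\<lambda>y. 0"], rule exI[of _ "\<lambda>y. 0"])
  by (auto simp: zero_blinfun.rep_eq[abs_def])

lemma C2_sum:
  fixes f :: "'i \<Rightarrow> 'a::euclidean_space \<Rightarrow> 'b::real_normed_vector"
  assumes "finite S" "\<And>i. i \<in> S \<Longrightarrow> C2_bounded_derivs (f i)"
  shows "C2_bounded_derivs (\<lambda>y. \<Sum>i\<in>S. f i y)"
  using assms
proof (induction S rule: finite_induct)
  case empty then show ?case by (simp add: C2_zero)
next
  case (insert x F)
  then show ?case using C2_add[of "f x" "\<lambda>y. \<Sum>i\<in>F. f i y"] by simp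
qed

lemma C2_lipschitz:
  fixes f :: "'a::euclidean_space \<Rightarrow> 'b::real_normed_vector"
  assumes "C2_bounded_derivs f"
  shows "\<exists>L\<ge>0. L-lipschitz_on UNIV f"
proof -
  obtain D1 :: "'a \<Rightarrow> 'a \<Rightarrow>\<^sub>L 'b" where
    d1: "\<And>y. (f has_derivative blinfun_apply (D1 y)) (at y)" and b1: "bounded (range D1)"
    using assms(1) unfolding C2_bounded_derivs_def by blast
  obtain B where B: "\<And>y. norm (D1 y) \<le> B" using b1 by (auto simp: bounded_iff)
  have "(max B 0)-lipschitz_on UNIV f"
    by (rule bounded_derivative_imp_lipschitz[where f'="\<lambda>y. blinfun_apply (D1 y)"])
       (use d1 B in \<open>auto simp: norm_blinfun.rep_eq[symmetric] intro: max.coboundedI1\<close>)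
  then show ?thesis by (intro exI[of _ "max B 0"]) auto
qed

theorem lemma4p2:
  fixes P :: "'e::finite \<Rightarrow> 'e \<Rightarrow> real"
    and \<mu> :: "'e \<Rightarrow> real"
    and \<Gamma> c :: real
    and p :: "'e \<Rightarrow> 'a::euclidean_space \<Rightarrow> 'a \<Rightarrow> real"
  assumes stoch: "stochastic P"
    and irred: "irreducible_mat P"
    and aper: "aperiodic_mat P"
    and inv: "invariant_prob P \<mu>"
    and uniq: "\<And>\<nu>. invariant_prob P \<nu> \<Longrightarrow> \<nu> = \<mu>"
    and Gamma_pos: "0 < \<Gamma>"
    and c_pos: "0 < c" and c_lt1: "c < 1"
    and mixing: "\<And>n i. (\<Sum>j\<in>UNIV. \<bar>matpow P n i j - \<mu> j\<bar>) \<le> \<Gamma> * c ^ n"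
    and p_nonneg: "\<And>k y u. u \<in> steps \<Longrightarrow> 0 \<le> p k y u"
    and p_sum: "\<And>k y. (\<Sum>u\<in>steps. p k y u) = 1"
    and p_smooth: "\<And>k u. u \<in> steps \<Longrightarrow> C2_bounded_derivs (\<lambda>y. p k y u)"
    and centered: "\<And>y. (\<Sum>k\<in>UNIV. \<mu> k *\<^sub>R drift p k y) = 0"
  shows "(\<forall>i y. summable (\<lambda>n. \<Sum>j\<in>UNIV. matpow P n i j *\<^sub>R drift p j y))
       \<and> (\<forall>i y. norm (vfun P p i y) \<le> \<Gamma> / (1 - c))
       \<and> (\<forall>i. C2_bounded_derivs (vfun P p i))
       \<and> (\<exists>L. \<forall>i. L-lipschitz_on UNIV (vfun P p i))"
proof -
  have fin_steps: "finite (steps :: 'a set)" by (simp add: steps_def)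
  have norm_steps: "norm u = 1" if "u \<in> (steps :: 'a set)" for u
    using that by (auto simp: steps_def)
  have gbound: "norm (drift p j y) \<le> 1" for j y
  proof -
    have "norm (drift p j y) \<le> (\<Sum>u\<in>steps. norm (p j y u *\<^sub>R u))"
      unfolding drift_def by (rule norm_sum)
    also have "\<dots> = (\<Sum>u\<in>steps. p j y u)"
      by (rule sum.cong) (auto simp: norm_steps p_nonneg)
    finally show ?thesis using p_sum by simp
  qed
  define b where "b = (\<lambda>i n j. matpow P n i j - \<mu> j)"
  have bb: "\<bar>b i n j\<bar> \<le> \<Gamma> * c ^ n" for i n j
  proof -
    have "\<bar>b i n j\<bar> \<le> (\<Sum>j\<in>UNIV. \<bar>matpow P n i j - \<mu> j\<bar>)"
      unfolding b_def by (rule member_le_sum) auto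
    then show ?thesis using mixing[of n i] by linarith
  qed
  have sgeo: "summable (\<lambda>n. \<Gamma> * c ^ n)"
    using c_pos c_lt1 by (intro summable_mult summable_geometric) auto
  have sb: "summable (\<lambda>n. b i n j)" for i j
    by (rule summable_comparison_test'[OF sgeo]) (use bb in auto)
  have term_eq: "(\<Sum>j\<in>UNIV. matpow P n i j *\<^sub>R drift p j y) = (\<Sum>j\<in>UNIV. b i n j *\<^sub>R drift p j y)" for n i y
  proof -
    have "(\<Sum>j\<in>UNIV. b i n j *\<^sub>R drift p j y) = (\<Sum>j\<in>UNIV. matpow P n i j *\<^sub>R drift p j y) - (\<Sum>j\<in>UNIV. \<mu> j *\<^sub>R drift p j y)"
      by (simp add: b_def scaleR_diff_left sum_subtractf)
    then show ?thesis using centered[of y] by simp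
  qed
  have sterm: "summable (\<lambda>n. \<Sum>j\<in>UNIV. b i n j *\<^sub>R drift p j y)" for i y
    by (intro summable_sum summable_scaleR_left sb)
  have S1: "\<forall>i y. summable (\<lambda>n. \<Sum>j\<in>UNIV. matpow P n i j *\<^sub>R drift p j y)"
    using sterm by (simp add: term_eq)
  define a where "a = (\<lambda>i j. \<Sum>n. b i n j)"
  have veq: "vfun P p i = (\<lambda>y. \<Sum>j\<in>UNIV. a i j *\<^sub>R drift p j y)" for i
  proof
    fix y
    have "vfun P p i y = (\<Sum>n. \<Sum>j\<in>UNIV. b i n j *\<^sub>R drift p j y)"
      unfolding vfun_def by (simp add: term_eq)
    also have "\<dots> = (\<Sum>j\<in>UNIV. \<Sum>n. b i n j *\<^sub>R drift p j y)"
      by (rule suminf_sum) (intro summable_scaleR_left sb)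
    also have "\<dots> = (\<Sum>j\<in>UNIV. a i j *\<^sub>R drift p j y)"
      unfolding a_def by (intro sum.cong refl) (simp add: suminf_scaleR_left[OF sb])
    finally show "vfun P p i y = (\<Sum>j\<in>UNIV. a i j *\<^sub>R drift p j y)" .
  qed
  have nterm: "norm (\<Sum>j\<in>UNIV. b i n j *\<^sub>R drift p j y) \<le> \<Gamma> * c ^ n" for i n y
  proof -
    have "norm (\<Sum>j\<in>UNIV. b i n j *\<^sub>R drift p j y) \<le> (\<Sum>j\<in>UNIV. norm (b i n j *\<^sub>R drift p j y))"
      by (rule norm_sum)
    also have "\<dots> \<le> (\<Sum>j\<in>UNIV. \<bar>matpow P n i j - \<mu> j\<bar>)"
    proof (rule sum_mono)
      fix j :: 'e
      have "norm (b i n j *\<^sub>R drift p j y) = \<bar>b i n j\<bar> * norm (drift p j y)" by simp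
      also have "\<dots> \<le> \<bar>b i n j\<bar> * 1" by (rule mult_left_mono[OF gbound]) auto
      finally show "norm (b i n j *\<^sub>R drift p j y) \<le> \<bar>matpow P n i j - \<mu> j\<bar>" by (simp add: b_def)
    qed
    also have "\<dots> \<le> \<Gamma> * c ^ n" by (rule mixing)
    finally show ?thesis .
  qed
  have S2: "\<forall>i y. norm (vfun P p i y) \<le> \<Gamma> / (1 - c)"
  proof (intro allI)
    fix i y
    have sn: "summable (\<lambda>n. norm (\<Sum>j\<in>UNIV. b i n j *\<^sub>R drift p j y))"
      by (rule summable_comparison_test'[OF sgeo]) (use nterm in auto)
    have "norm (vfun P p i y) = norm (\<Sum>n. \<Sum>j\<in>UNIV. b i n j *\<^sub>R drift p j y)"
      unfolding vfun_def by (simp add: term_eq)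
    also have "\<dots> \<le> (\<Sum>n. norm (\<Sum>j\<in>UNIV. b i n j *\<^sub>R drift p j y))"
      by (rule summable_norm[OF sn])
    also have "\<dots> \<le> (\<Sum>n. \<Gamma> * c ^ n)"
      by (rule suminf_le[OF nterm sn sgeo])
    also have "\<dots> = \<Gamma> / (1 - c)"
      using c_pos c_lt1 by (simp add: suminf_mult summable_geometric suminf_geometric)
    finally show "norm (vfun P p i y) \<le> \<Gamma> / (1 - c)" .
  qed
  have C2g: "C2_bounded_derivs (drift p j)" for j
  proof -
    have "C2_bounded_derivs (\<lambda>y. \<Sum>u\<in>steps. p j y u *\<^sub>R u)"
      by (intro C2_sum fin_steps C2_linear[where L="\<lambda>r. r *\<^sub>R _"] p_smooth bounded_linear_scaleR_left)
    then show ?thesis by (simp add: drift_def[abs_def])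
  qed
  have S3: "\<forall>i. C2_bounded_derivs (vfun P p i)"
  proof
    fix i
    show "C2_bounded_derivs (vfun P p i)"
      unfolding veq
      by (intro C2_sum finite_UNIV C2_linear[where L="\<lambda>x. a i _ *\<^sub>R x"] C2g bounded_linear_scaleR_right) simp
  qed
  have "\<forall>i. \<exists>L\<ge>0. L-lipschitz_on UNIV (vfun P p i)"
    using S3 C2_lipschitz by blast
  then obtain Lf where Lf: "\<And>i. Lf i \<ge> 0" "\<And>i. (Lf i)-lipschitz_on UNIV (vfun P p i)"
    by metis
  have S4: "\<exists>L. \<forall>i. L-lipschitz_on UNIV (vfun P p i)"
  proof (intro exI allI)
    fix i
    have "Lf i \<le> (\<Sum>k\<in>UNIV. Lf k)" by (rule member_le_sum) (auto simp: Lf)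
    then show "(\<Sum>k\<in>UNIV. Lf k)-lipschitz_on UNIV (vfun P p i)"
      by (rule lipschitz_on_le[OF Lf(2)])
  qed
  show ?thesis using S1 S2 S3 S4 by blast
qed

end
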